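(* Let $W=\mathbb C^N$ and let $\mathcal I\subset \mathrm{Sym}(W)$ be a homogeneous ideal. Suppose that for some integers $0\le q<d$ one has $\dim\mathcal I_d\ge \dim S^{d-q}W=\binom{N+d-q-1}{d-q}$. Then for every integer $\tau\ge 0$, $$\dim \mathcal I_{d+\tau}\ge \dim S^{d-q+\tau}W=\binom{N+\tau+d-q-1}{\tau+d-q}.$$
   Context: $S^dW$ denotes the space of homogeneous polynomials of degree $d$ in $N$ variables and $\mathrm{Sym}(W)=\bigoplus_d S^dW$ is the polynomial ring. For a homogeneous ideal $\mathcal I$, $\mathcal I_d=\mathcal I\cap S^dW$ is its degree $d$ component. *)

theory Defs
  imports Complex_Main "HOL-Library.Poly_Mapping"
begin

text \<open>Polynomials over the complex numbers are represented as finitely supported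
  maps from monomials (finitely supported exponent vectors) to coefficients.\<close>

type_synonym cpoly = "(nat \<Rightarrow>\<^sub>0 nat) \<Rightarrow>\<^sub>0 complex"

definition mdeg :: "(nat \<Rightarrow>\<^sub>0 nat) \<Rightarrow> nat" where
  "mdeg m = (\<Sum>i\<in>Poly_Mapping.keys m. Poly_Mapping.lookup m i)"

definition SymW :: "nat \<Rightarrow> cpoly set" where
  "SymW N = {p. \<forall>m\<in>Poly_Mapping.keys p. Poly_Mapping.keys m \<subseteq> {..<N}}"

definition SdW :: "nat \<Rightarrow> nat \<Rightarrow> cpoly set" where
  "SdW N d = {p \<in> SymW N. \<forall>m\<in>Poly_Mapping.keys p. mdeg m = d}"

definition hom_part :: "nat \<Rightarrow> cpoly \<Rightarrow> cpoly" where
  "hom_part d p = Abs_poly_mapping (\<lambda>m. Poly_Mapping.lookup p m when mdeg m = d)"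

definition is_ideal :: "nat \<Rightarrow> cpoly set \<Rightarrow> bool" where
  "is_ideal N I \<longleftrightarrow> I \<subseteq> SymW N \<and> 0 \<in> I \<and> (\<forall>p\<in>I. \<forall>q\<in>I. p + q \<in> I)
     \<and> (\<forall>f\<in>SymW N. \<forall>p\<in>I. f * p \<in> I)"

definition is_homogeneous_ideal :: "nat \<Rightarrow> cpoly set \<Rightarrow> bool" where
  "is_homogeneous_ideal N I \<longleftrightarrow> is_ideal N I \<and> (\<forall>p\<in>I. \<forall>d. hom_part d p \<in> I)"

definition cscale :: "complex \<Rightarrow> cpoly \<Rightarrow> cpoly" where
  "cscale c p = Poly_Mapping.map (\<lambda>a. c * a) p"

definition cdim :: "cpoly set \<Rightarrow> nat" where
  "cdim V = vector_space.dim cscale V"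

end

theory Submission
  imports Defs
begin

definition MonF :: "nat \<Rightarrow> nat \<Rightarrow> (nat \<Rightarrow> nat) set" where
  "MonF n d = {f. (\<forall>x\<ge>n. f x = 0) \<and> (\<Sum>x<n. f x) = d}"

definition inc :: "nat \<Rightarrow> (nat \<Rightarrow> nat) \<Rightarrow> (nat \<Rightarrow> nat)" where
  "inc l f = f(l := Suc (f l))"

definition upF :: "nat \<Rightarrow> (nat \<Rightarrow> nat) set \<Rightarrow> (nat \<Rightarrow> nat) set" where
  "upF n M = (\<Union>l<n. inc l ` M)"

lemma inj_inc: "inj (inc l)"
proof (rule injI)
  fix f g assume "inc l f = inc l g"
  hence "\<And>x. (f(l := Suc (f l))) x = (g(l := Suc (g l))) x" by (simp add: inc_def)
  from this[of l] this have "\<And>x. f x = g x" by (metis fun_upd_apply nat.inject)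
  thus "f = g" by auto
qed

lemma sum_upd_lessThan:
  fixes f :: "nat \<Rightarrow> nat" and l n v :: nat
  assumes "l < n"
  shows "(\<Sum>x<n. (f(l := v)) x) + f l = (\<Sum>x<n. f x) + v"
proof -
  have "(\<Sum>x<n. (f(l := v)) x) = (\<Sum>x\<in>{..<n}-{l}. f x) + v"
  proof -
    have "(\<Sum>x<n. (f(l := v)) x) = (f(l := v)) l + (\<Sum>x\<in>{..<n}-{l}. (f(l := v)) x)"
      using assms by (intro sum.remove) auto
    moreover have "(\<Sum>x\<in>{..<n}-{l}. (f(l := v)) x) = (\<Sum>x\<in>{..<n}-{l}. f x)"
      by (intro sum.cong) auto
    ultimately show ?thesis by simp
  qed
  moreover have "(\<Sum>x<n. f x) = (\<Sum>x\<in>{..<n}-{l}. f x) + f l"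
    using assms by (subst sum.remove[of _ l]) auto
  ultimately show ?thesis by simp
qed

lemma inc_MonF: "f \<in> MonF n d \<Longrightarrow> l < n \<Longrightarrow> inc l f \<in> MonF n (Suc d)"
  unfolding MonF_def inc_def using sum_upd_lessThan[of l n f "Suc (f l)"] by auto

lemma finite_MonF: "finite (MonF n d)"
proof -
  have "MonF n d \<subseteq> {f. \<forall>x. (x \<in> {..<n} \<longrightarrow> f x \<in> {..d}) \<and> (x \<notin> {..<n} \<longrightarrow> f x = 0)}"
  proof (intro subsetI CollectI allI conjI impI)
    fix f x assume f: "f \<in> MonF n d"
    { assume "x \<in> {..<n}"
      hence "f x \<le> (\<Sum>x<n. f x)" by (intro member_le_sum) auto
      thus "f x \<in> {..d}" using f by (simp add: MonF_def) }
    { assume "x \<notin> {..<n}" thus "f x = 0" using f by (simp add: MonF_def not_less) }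
  qed
  thus ?thesis by (rule finite_subset) (intro finite_set_of_finite_funs; simp)
qed

lemma MonF_0_Suc: "MonF 0 (Suc k) = {}"
  by (auto simp: MonF_def)

lemma MonF_n_0: "MonF n 0 = {\<lambda>_. 0::nat}"
proof (intro equalityI subsetI)
  fix f assume "f \<in> MonF n 0"
  thus "f \<in> {\<lambda>_. 0}" unfolding MonF_def by (auto simp: fun_eq_iff) (metis lessThan_iff not_le)
qed (auto simp: MonF_def)

lemma MonF_restrict: "{f \<in> MonF (Suc n) e. f n = 0} = MonF n e"
proof -
  have "((\<forall>x\<ge>Suc n. f x = 0) \<and> f n = 0) \<longleftrightarrow> (\<forall>x\<ge>n. f x = 0)" for f :: "nat \<Rightarrow> nat"
    using le_eq_less_or_eq Suc_le_eq by auto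
  thus ?thesis by (auto simp: MonF_def)
qed

lemma MonF_Suc_split:
  "MonF (Suc n) (Suc k) = MonF n (Suc k) \<union> inc n ` MonF (Suc n) k"
proof (intro equalityI subsetI)
  fix f assume f: "f \<in> MonF (Suc n) (Suc k)"
  show "f \<in> MonF n (Suc k) \<union> inc n ` MonF (Suc n) k"
  proof (cases "f n = 0")
    case True thus ?thesis using f MonF_restrict by blast
  next
    case False
    let ?g = "f(n := f n - 1)"
    have "inc n ?g = f" using False by (auto simp: inc_def)
    moreover have "?g \<in> MonF (Suc n) k"
      using f False sum_upd_lessThan[of n "Suc n" f "f n - 1"] by (auto simp: MonF_def)
    ultimately show ?thesis by (metis UnI2 image_eqI)
  qed
next
  fix f assume "f \<in> MonF n (Suc k) \<union> inc n ` MonF (Suc n) k"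
  thus "f \<in> MonF (Suc n) (Suc k)"
    using MonF_restrict[of n "Suc k"] inc_MonF[of _ "Suc n" k n] by auto
qed

lemma card_MonF_Suc:
  "card (MonF (Suc n) (Suc k)) = card (MonF (Suc n) k) + card (MonF n (Suc k))"
proof -
  have "MonF n (Suc k) \<inter> inc n ` MonF (Suc n) k = {}"
    by (auto simp: MonF_def inc_def)
  hence "card (MonF (Suc n) (Suc k)) = card (MonF n (Suc k)) + card (inc n ` MonF (Suc n) k)"
    by (simp add: MonF_Suc_split card_Un_disjoint finite_MonF)
  thus ?thesis using inj_inc[of n] by (simp add: card_image inj_on_subset)
qed


definition key :: "nat \<Rightarrow> nat \<Rightarrow> (nat \<Rightarrow> nat) \<Rightarrow> (nat \<Rightarrow> nat)" where
  "key i j f = f(j := 0, i := f i + f j)"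

definition recon :: "nat \<Rightarrow> nat \<Rightarrow> (nat \<Rightarrow> nat) \<Rightarrow> nat \<Rightarrow> (nat \<Rightarrow> nat)" where
  "recon i j K b = K(j := b, i := K i - b)"

definition fib :: "nat \<Rightarrow> nat \<Rightarrow> (nat \<Rightarrow> nat) set \<Rightarrow> (nat \<Rightarrow> nat) \<Rightarrow> (nat \<Rightarrow> nat) set" where
  "fib i j M K = {g\<in>M. key i j g = K}"

definition cmp :: "nat \<Rightarrow> nat \<Rightarrow> nat \<Rightarrow> nat \<Rightarrow> (nat \<Rightarrow> nat) set \<Rightarrow> (nat \<Rightarrow> nat) set" where
  "cmp N d i j M = {f \<in> MonF N d. f j < card (fib i j M (key i j f))}"

lemma card_sum_fib:
  assumes "finite X"
  shows "card X = (\<Sum>K\<in>key i j ` X. card (fib i j X K))"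
proof -
  have "card X = (\<Sum>x\<in>X. 1::nat)" by simp
  also have "\<dots> = (\<Sum>K\<in>key i j ` X. \<Sum>x\<in>{x\<in>X. key i j x = K}. 1)"
    using assms by (rule sum.image_gen)
  finally show ?thesis by (simp add: fib_def)
qed

lemma sum_fib:
  assumes "finite X"
  shows "(\<Sum>x\<in>X. h x) = (\<Sum>K\<in>key i j ` X. \<Sum>x\<in>fib i j X K. h x)"
  unfolding fib_def using assms by (rule sum.image_gen)

lemma inc_j: "inc l f j = (if l = j then Suc (f j) else f j)"
  by (auto simp: inc_def)

lemma upF_sub: "M \<subseteq> MonF N e \<Longrightarrow> upF N M \<subseteq> MonF N (Suc e)"
  by (auto simp: upF_def intro: inc_MonF)

context
  fixes N d i j :: nat
  assumes ij: "i \<noteq> j" "i < N" "j < N"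
begin

lemma key_simps: "key i j f j = 0" "key i j f i = f i + f j"
  "x \<noteq> i \<Longrightarrow> x \<noteq> j \<Longrightarrow> key i j f x = f x"
  using ij by (auto simp: key_def)

lemma key_key: "key i j (key i j f) = key i j f"
  using ij by (auto simp: key_def fun_eq_iff)

lemma recon_key: "recon i j (key i j f) (f j) = f"
  using ij by (auto simp: key_def recon_def fun_eq_iff)

lemma key_recon: "K j = 0 \<Longrightarrow> b \<le> K i \<Longrightarrow> key i j (recon i j K b) = K"
  using ij by (auto simp: key_def recon_def fun_eq_iff)

lemma recon_j: "recon i j K b j = b"
  using ij by (auto simp: recon_def)

lemma key_eqI:
  assumes "key i j f = key i j g" "f j = g j" shows "f = g"
proof -
  have "f = recon i j (key i j f) (f j)" by (rule recon_key[symmetric])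
  also have "\<dots> = recon i j (key i j g) (g j)" using assms by (simp only:)
  also have "\<dots> = g" by (rule recon_key)
  finally show ?thesis .
qed

lemma sum_two:
  fixes f :: "nat \<Rightarrow> nat"
  shows "(\<Sum>x<N. f x) = f i + f j + (\<Sum>x\<in>{..<N}-{i,j}. f x)"
proof -
  have "(\<Sum>x<N. f x) = (\<Sum>x\<in>{i,j}. f x) + (\<Sum>x\<in>{..<N}-{i,j}. f x)"
    using ij by (subst sum.subset_diff[of "{i,j}"]) auto
  thus ?thesis using ij by simp
qed

lemma key_MonF: "f \<in> MonF N d \<Longrightarrow> key i j f \<in> MonF N d"
proof -
  assume f: "f \<in> MonF N d"
  have r: "(\<Sum>x\<in>{..<N}-{i,j}. key i j f x) = (\<Sum>x\<in>{..<N}-{i,j}. f x)"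
    by (intro sum.cong) (auto simp: key_simps)
  have "(\<Sum>x<N. key i j f x) = (\<Sum>x<N. f x)"
    unfolding sum_two[of "key i j f"] sum_two[of f] r key_simps by simp
  moreover have "\<forall>x\<ge>N. key i j f x = 0" using f ij by (auto simp: MonF_def key_def)
  ultimately show ?thesis using f by (simp add: MonF_def)
qed

lemma recon_MonF: "K \<in> MonF N d \<Longrightarrow> K j = 0 \<Longrightarrow> b \<le> K i \<Longrightarrow> recon i j K b \<in> MonF N d"
proof -
  assume K: "K \<in> MonF N d" "K j = 0" "b \<le> K i"
  have r: "(\<Sum>x\<in>{..<N}-{i,j}. recon i j K b x) = (\<Sum>x\<in>{..<N}-{i,j}. K x)"
    by (intro sum.cong) (auto simp: recon_def)
  have ri: "recon i j K b i = K i - b" and rj: "recon i j K b j = b"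
    using ij by (auto simp: recon_def)
  have "(\<Sum>x<N. recon i j K b x) = (\<Sum>x<N. K x)"
    unfolding sum_two[of "recon i j K b"] sum_two[of K] r ri rj using K by simp
  moreover have "\<forall>x\<ge>N. recon i j K b x = 0" using K ij by (auto simp: MonF_def recon_def)
  ultimately show ?thesis using K by (simp add: MonF_def)
qed

lemma key_inc: "key i j (inc l f) = inc (if l = j then i else l) (key i j f)"
  using ij by (auto simp: key_def inc_def fun_eq_iff)

lemma inj_on_fibj: "X \<subseteq> {f. key i j f = K} \<Longrightarrow> inj_on (\<lambda>f. f j) X"
proof (rule inj_onI)
  fix x y assume "X \<subseteq> {f. key i j f = K}" "x \<in> X" "y \<in> X" "x j = y j"
  thus "x = y" using key_eqI[of x y] by auto
qed

lemma finite_fib: "M \<subseteq> MonF N e \<Longrightarrow> finite (fib i j M K)"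
  unfolding fib_def by (rule finite_subset[OF _ finite_MonF]) auto

lemma fib_le: "M \<subseteq> MonF N d \<Longrightarrow> g \<in> M \<Longrightarrow> card (fib i j M (key i j g)) \<le> Suc (key i j g i)"
proof -
  assume M: "M \<subseteq> MonF N d" "g \<in> M"
  have "fib i j M (key i j g) \<subseteq> recon i j (key i j g) ` {..key i j g i}"
  proof
    fix f assume "f \<in> fib i j M (key i j g)"
    hence e: "key i j f = key i j g" by (auto simp: fib_def)
    have "f = recon i j (key i j g) (f j)" unfolding e[symmetric] by (rule recon_key[symmetric])
    moreover have "f j \<le> key i j g i" unfolding e[symmetric] key_simps(2) by simp
    ultimately show "f \<in> recon i j (key i j g) ` {..key i j g i}" by auto
  qed
  hence "card (fib i j M (key i j g)) \<le> card (recon i j (key i j g) ` {..key i j g i})"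
    by (intro card_mono) auto
  also have "\<dots> \<le> card {..key i j g i}" by (rule card_image_le) simp
  finally have "card (fib i j M (key i j g)) \<le> card {..key i j g i}" .
  thus ?thesis by simp
qed

lemma fib_cmp:
  assumes M: "M \<subseteq> MonF N d" and g: "g \<in> M"
  shows "fib i j (cmp N d i j M) (key i j g) = recon i j (key i j g) ` {..<card (fib i j M (key i j g))}"
proof (intro equalityI subsetI)
  fix f assume "f \<in> fib i j (cmp N d i j M) (key i j g)"
  hence f: "key i j f = key i j g" "f j < card (fib i j M (key i j g))"
    by (auto simp: fib_def cmp_def)
  have "f = recon i j (key i j g) (f j)" unfolding f(1)[symmetric] by (rule recon_key[symmetric])
  thus "f \<in> recon i j (key i j g) ` {..<card (fib i j M (key i j g))}"
    using f(2) by (intro image_eqI[where x="f j"]) auto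
next
  fix f assume "f \<in> recon i j (key i j g) ` {..<card (fib i j M (key i j g))}"
  then obtain b where b: "b < card (fib i j M (key i j g))" "f = recon i j (key i j g) b" by auto
  have bi: "b \<le> key i j g i" using fib_le[OF M g] b by simp
  have "key i j g \<in> MonF N d" using M g key_MonF by auto
  hence "f \<in> MonF N d" using b bi recon_MonF key_simps by simp
  moreover have "key i j f = key i j g" using b bi key_recon key_simps by simp
  moreover have "f j = b" using b recon_j by simp
  ultimately show "f \<in> fib i j (cmp N d i j M) (key i j g)"
    using b by (auto simp: fib_def cmp_def)
qed

lemma card_fib_cmp:
  assumes M: "M \<subseteq> MonF N d" and g: "g \<in> M"
  shows "card (fib i j (cmp N d i j M) (key i j g)) = card (fib i j M (key i j g))"
proof -
  have "inj_on (recon i j (key i j g)) {..<card (fib i j M (key i j g))}"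
  proof (rule inj_onI)
    fix x y assume "recon i j (key i j g) x = recon i j (key i j g) y"
    hence "recon i j (key i j g) x j = recon i j (key i j g) y j" by simp
    thus "x = y" by (simp add: recon_j)
  qed
  thus ?thesis using fib_cmp[OF assms] by (simp add: card_image)
qed

lemma key_image_cmp:
  assumes M: "M \<subseteq> MonF N d"
  shows "key i j ` cmp N d i j M = key i j ` M"
proof (intro equalityI subsetI)
  fix K assume "K \<in> key i j ` cmp N d i j M"
  then obtain f where f: "f \<in> cmp N d i j M" "K = key i j f" by auto
  hence "fib i j M K \<noteq> {}" by (auto simp: cmp_def)
  thus "K \<in> key i j ` M" by (auto simp: fib_def)
next
  fix K assume "K \<in> key i j ` M"
  then obtain g where g: "g \<in> M" "K = key i j g" by auto
  have "g \<in> fib i j M K" using g by (auto simp: fib_def)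
  hence "card (fib i j M K) > 0" using finite_fib[OF M] by (auto simp: card_gt_0_iff)
  hence "recon i j K 0 \<in> fib i j (cmp N d i j M) K"
    using fib_cmp[OF M g(1)] g by auto
  hence r: "recon i j K 0 \<in> cmp N d i j M" "key i j (recon i j K 0) = K" by (simp_all add: fib_def)
  show "K \<in> key i j ` cmp N d i j M"
    by (rule image_eqI[where x="recon i j K 0"]) (use r in simp_all)
qed

lemma cmp_sub: "cmp N d i j M \<subseteq> MonF N d"
  by (auto simp: cmp_def)

lemma card_cmp:
  assumes M: "M \<subseteq> MonF N d"
  shows "card (cmp N d i j M) = card M"
proof -
  have fM: "finite M" using M finite_MonF finite_subset by blast
  have fC: "finite (cmp N d i j M)" using cmp_sub finite_MonF finite_subset by blast
  have "card (cmp N d i j M) = (\<Sum>K\<in>key i j ` cmp N d i j M. card (fib i j (cmp N d i j M) K))"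
    by (rule card_sum_fib[OF fC])
  also have "\<dots> = (\<Sum>K\<in>key i j ` M. card (fib i j (cmp N d i j M) K))"
    using key_image_cmp[OF M] by simp
  also have "\<dots> = (\<Sum>K\<in>key i j ` M. card (fib i j M K))"
    by (intro sum.cong) (auto simp: card_fib_cmp[OF M])
  also have "\<dots> = card M" by (rule card_sum_fib[OF fM, symmetric])
  finally show ?thesis .
qed

lemma cmp_stable:
  assumes "cmp N d i j M = M" "f \<in> M" "0 < f j"
  shows "f(j := f j - 1, i := Suc (f i)) \<in> M"
proof -
  let ?g = "f(j := f j - 1, i := Suc (f i))"
  have fC: "f \<in> cmp N d i j M" using assms by simp
  have kg: "key i j ?g = key i j f" using ij assms(3) by (auto simp: key_def fun_eq_iff)
  have gj: "?g j = f j - 1" using ij by simp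
  have "?g \<in> MonF N d"
  proof -
    have "?g = recon i j (key i j f) (f j - 1)" using ij assms(3) by (auto simp: recon_def key_def fun_eq_iff)
    moreover have "key i j f \<in> MonF N d" using fC key_MonF by (auto simp: cmp_def)
    ultimately show ?thesis using recon_MonF key_simps by simp
  qed
  moreover have "?g j < card (fib i j M (key i j ?g))" using fC kg gj assms(3)
    by (auto simp: cmp_def)
  ultimately have "?g \<in> cmp N d i j M" by (auto simp: cmp_def)
  thus ?thesis using assms by simp
qed

end

lemma sum_lessThan_card_le:
  fixes B :: "nat set"
  assumes "finite B"
  shows "\<Sum>{..<card B} \<le> \<Sum>B \<and> (\<Sum>B \<le> \<Sum>{..<card B} \<longrightarrow> B = {..<card B})"
  using assms
proof (induction "card B" arbitrary: B)
  case 0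
  hence "B = {}" by simp
  thus ?case by simp
next
  case (Suc c B)
  have fin: "finite B" and cB: "card B = Suc c" using Suc.prems Suc.hyps(2) by auto
  have ne: "B \<noteq> {}" using cB by auto
  define b where "b = Max B"
  have bB: "b \<in> B" unfolding b_def using fin ne by (rule Max_in)
  have bmax: "x \<le> b" if "x \<in> B" for x unfolding b_def using fin that by (rule Max_ge)
  define B' where "B' = B - {b}"
  have fB': "finite B'" unfolding B'_def using fin by simp
  have cB': "card B' = c" unfolding B'_def using cB bB fin by (simp add: card_Diff_singleton)
  have IHc: "\<Sum>{..<card B'} \<le> \<Sum>B' \<and> (\<Sum>B' \<le> \<Sum>{..<card B'} \<longrightarrow> B' = {..<card B'})"
    by (rule Suc.hyps(1)[OF cB'[symmetric] fB'])
  have IH1: "\<Sum>{..<c} \<le> \<Sum>B'" using IHc unfolding cB' by blast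
  have IH2: "\<Sum>B' \<le> \<Sum>{..<c} \<Longrightarrow> B' = {..<c}" using IHc unfolding cB' by blast
  have "B \<subseteq> {..b}" using bmax by auto
  hence "card B \<le> card {..b}" by (rule card_mono[rotated]) simp
  hence bc: "c \<le> b" using cB by simp
  have sB: "\<Sum>B = b + \<Sum>B'" unfolding B'_def using fin bB by (rule sum.remove)
  have sc: "\<Sum>{..<Suc c} = c + \<Sum>{..<c}" by simp
  show ?case
  proof
    show "\<Sum>{..<card B} \<le> \<Sum>B" unfolding cB sc sB using IH1 bc by linarith
    show "\<Sum>B \<le> \<Sum>{..<card B} \<longrightarrow> B = {..<card B}"
    proof
      assume "\<Sum>B \<le> \<Sum>{..<card B}"
      hence h: "b + \<Sum>B' \<le> c + \<Sum>{..<c}" unfolding cB sc sB .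
      hence bc': "b = c" using IH1 bc by linarith
      have "\<Sum>B' \<le> \<Sum>{..<c}" using h IH1 bc by linarith
      hence "B' = {..<c}" by (rule IH2)
      hence "B = insert c {..<c}" using bB bc' unfolding B'_def by auto
      thus "B = {..<card B}" unfolding cB by (simp add: lessThan_Suc)
    qed
  qed
qed

context
  fixes N d i j :: nat
  assumes ij: "i \<noteq> j" "i < N" "j < N"
begin

lemma cmp_potential:
  assumes M: "M \<subseteq> MonF N d" and ne: "cmp N d i j M \<noteq> M"
  shows "(\<Sum>f\<in>cmp N d i j M. f j) < (\<Sum>f\<in>M. f j)"
proof -
  have fM: "finite M" using M finite_MonF finite_subset by blast
  have fC: "finite (cmp N d i j M)" using cmp_sub[OF ij] finite_MonF finite_subset by blast
  have fK: "finite (key i j ` M)" using fM by simp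
  have "(\<Sum>f\<in>cmp N d i j M. f j) = (\<Sum>K\<in>key i j ` cmp N d i j M. \<Sum>f\<in>fib i j (cmp N d i j M) K. f j)"
    by (rule sum_fib[OF fC])
  hence eqC: "(\<Sum>f\<in>cmp N d i j M. f j) = (\<Sum>K\<in>key i j ` M. \<Sum>f\<in>fib i j (cmp N d i j M) K. f j)"
    using key_image_cmp[OF ij M] by simp
  have eqM: "(\<Sum>f\<in>M. f j) = (\<Sum>K\<in>key i j ` M. \<Sum>f\<in>fib i j M K. f j)"
    by (rule sum_fib[OF fM])
  have fibC: "(\<Sum>f\<in>fib i j (cmp N d i j M) K. f j) = \<Sum>{..<card (fib i j M K)}"
    if KM: "K \<in> key i j ` M" for K
  proof -
    obtain g where g: "g \<in> M" "K = key i j g" using KM by auto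
    have inj: "inj_on (recon i j K) {..<card (fib i j M K)}"
    proof (rule inj_onI)
      fix x y assume "recon i j K x = recon i j K y"
      hence "recon i j K x j = recon i j K y j" by simp
      thus "x = y" by (simp add: recon_j[OF ij])
    qed
    have "(\<Sum>f\<in>fib i j (cmp N d i j M) K. f j) = (\<Sum>b\<in>{..<card (fib i j M K)}. recon i j K b j)"
      using fib_cmp[OF ij M g(1)] g(2) inj by (simp add: sum.reindex)
    thus ?thesis by (simp add: recon_j[OF ij])
  qed
  have fibM: "(\<Sum>f\<in>fib i j M K. f j) = \<Sum>((\<lambda>f. f j) ` fib i j M K)"
    and cardM: "card ((\<lambda>f. f j) ` fib i j M K) = card (fib i j M K)" for K
  proof -
    have "inj_on (\<lambda>f. f j) (fib i j M K)" by (rule inj_on_fibj[OF ij, where K=K]) (auto simp: fib_def)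
    thus "(\<Sum>f\<in>fib i j M K. f j) = \<Sum>((\<lambda>f. f j) ` fib i j M K)"
      "card ((\<lambda>f. f j) ` fib i j M K) = card (fib i j M K)"
      by (simp_all add: sum.reindex card_image)
  qed
  have le: "\<Sum>{..<card (fib i j M K)} \<le> \<Sum>((\<lambda>f. f j) ` fib i j M K)" for K
  proof -
    have "finite ((\<lambda>f. f j) ` fib i j M K)" using finite_fib[OF ij M] by simp
    from conjunct1[OF sum_lessThan_card_le[OF this]] show ?thesis unfolding cardM .
  qed
  obtain K where K: "K \<in> key i j ` M" "fib i j (cmp N d i j M) K \<noteq> fib i j M K"
  proof (rule ccontr)
    assume "\<not> thesis"
    with that have all: "\<And>K. K \<in> key i j ` M \<Longrightarrow> fib i j (cmp N d i j M) K = fib i j M K" by blast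
    have "cmp N d i j M = M"
    proof (intro equalityI subsetI)
      fix f assume f: "f \<in> cmp N d i j M"
      hence "key i j f \<in> key i j ` M" using key_image_cmp[OF ij M] by auto
      hence "fib i j (cmp N d i j M) (key i j f) = fib i j M (key i j f)" by (rule all)
      moreover have "f \<in> fib i j (cmp N d i j M) (key i j f)" using f by (simp add: fib_def)
      ultimately have "f \<in> fib i j M (key i j f)" by simp
      thus "f \<in> M" by (simp add: fib_def)
    next
      fix f assume f: "f \<in> M"
      hence "key i j f \<in> key i j ` M" by auto
      hence "f \<in> fib i j (cmp N d i j M) (key i j f)" using all f by (simp add: fib_def)
      thus "f \<in> cmp N d i j M" by (simp add: fib_def)
    qed
    thus False using ne by simp
  qed
  obtain g where g: "g \<in> M" "K = key i j g" using K(1) by auto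
  have strict: "\<Sum>{..<card (fib i j M K)} < \<Sum>((\<lambda>f. f j) ` fib i j M K)"
  proof (rule ccontr)
    assume "\<not> ?thesis"
    hence "\<Sum>((\<lambda>f. f j) ` fib i j M K) \<le> \<Sum>{..<card (fib i j M K)}" by simp
    hence le2: "\<Sum>((\<lambda>f. f j) ` fib i j M K) \<le> \<Sum>{..<card ((\<lambda>f. f j) ` fib i j M K)}"
      by (simp only: cardM)
    have "finite ((\<lambda>f. f j) ` fib i j M K)" using finite_fib[OF ij M] by simp
    from mp[OF conjunct2[OF sum_lessThan_card_le[OF this]] le2]
    have im: "(\<lambda>f. f j) ` fib i j M K = {..<card (fib i j M K)}"
      by (simp only: cardM)
    have "fib i j (cmp N d i j M) K = fib i j M K"
    proof (intro equalityI subsetI)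
      fix f assume "f \<in> fib i j (cmp N d i j M) K"
      then obtain b where b: "b < card (fib i j M K)" "f = recon i j K b"
        using fib_cmp[OF ij M g(1)] g(2) by auto
      have "b \<in> (\<lambda>f. f j) ` fib i j M K" using im b(1) by simp
      then obtain h where h: "h \<in> fib i j M K" "h j = b" by auto
      have hk: "key i j h = K" using h by (simp add: fib_def)
      have "h = recon i j K b" unfolding hk[symmetric] h(2)[symmetric] by (rule recon_key[OF ij, symmetric])
      thus "f \<in> fib i j M K" using h b by simp
    next
      fix f assume f: "f \<in> fib i j M K"
      hence "f j < card (fib i j M K)" using im by auto
      moreover have fk: "key i j f = K" using f by (simp add: fib_def)
      have "f = recon i j K (f j)" unfolding fk[symmetric] by (rule recon_key[OF ij, symmetric])
      ultimately have "f \<in> recon i j K ` {..<card (fib i j M K)}" by (intro image_eqI[where x="f j"]) auto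
      thus "f \<in> fib i j (cmp N d i j M) K"
        using fib_cmp[OF ij M g(1)] g(2) by simp
    qed
    thus False using K(2) by simp
  qed
  have "(\<Sum>K\<in>key i j ` M. \<Sum>f\<in>fib i j (cmp N d i j M) K. f j) < (\<Sum>K\<in>key i j ` M. \<Sum>f\<in>fib i j M K. f j)"
  proof (rule sum_strict_mono_ex1[OF fK])
    show "\<forall>x\<in>key i j ` M. (\<Sum>f\<in>fib i j (cmp N d i j M) x. f j) \<le> (\<Sum>f\<in>fib i j M x. f j)"
      using fibC fibM le by simp
    show "\<exists>a\<in>key i j ` M. (\<Sum>f\<in>fib i j (cmp N d i j M) a. f j) < (\<Sum>f\<in>fib i j M a. f j)"
      using K(1) fibC fibM strict by (intro bexI[of _ K]) simp_all
  qed
  thus ?thesis using eqC eqM by simp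
qed

lemma cmp_up_claim:
  assumes M: "M \<subseteq> MonF N d" and y: "y \<in> upF N (cmp N d i j M)"
  shows "y j < card (fib i j (upF N M) (key i j y))"
proof -
  obtain l f where l: "l < N" and f: "f \<in> cmp N d i j M" and yf: "y = inc l f"
    using y by (auto simp: upF_def)
  define F where "F = fib i j M (key i j f)"
  have fj: "f j < card F" using f by (simp add: cmp_def F_def)
  have finF: "finite F" using finite_fib[OF ij M] by (simp add: F_def)
  have fU: "finite (fib i j (upF N M) (key i j y))"
    using finite_fib[OF ij upF_sub[OF M]] .
  have keyF: "\<And>g. g \<in> F \<Longrightarrow> key i j g = key i j f \<and> g \<in> M" by (simp add: F_def fib_def)
  show ?thesis
  proof (cases "l = j")
    case False
    have sub: "inc l ` F \<subseteq> fib i j (upF N M) (key i j y)"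
    proof
      fix z assume "z \<in> inc l ` F"
      then obtain g where g: "g \<in> F" "z = inc l g" by auto
      have "z \<in> upF N M" using g keyF l by (auto simp: upF_def)
      moreover have "key i j z = key i j y" using g keyF yf by (simp add: key_inc[OF ij])
      ultimately show "z \<in> fib i j (upF N M) (key i j y)" by (simp add: fib_def)
    qed
    have "inj_on (inc l) F" using inj_inc[of l] by (rule inj_on_subset) simp
    hence "card F = card (inc l ` F)" by (simp add: card_image)
    also have "\<dots> \<le> card (fib i j (upF N M) (key i j y))" using sub fU by (rule card_mono[rotated])
    finally show ?thesis using fj yf False by (simp add: inc_j)
  next
    case True
    have Fne: "F \<noteq> {}" using fj by auto
    define mx where "mx = Max ((\<lambda>g. g j) ` F)"
    have "mx \<in> (\<lambda>g. g j) ` F" unfolding mx_def using Fne finF by (intro Max_in) auto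
    then obtain gs where gs: "gs \<in> F" "gs j = mx" by auto
    have gmax: "g j \<le> mx" if "g \<in> F" for g using that finF mx_def by simp
    let ?A = "insert (inc j gs) (inc i ` F)"
    have sub: "?A \<subseteq> fib i j (upF N M) (key i j y)"
    proof
      fix z assume "z \<in> ?A"
      then obtain g l' where g: "g \<in> F" "z = inc l' g" "l' = i \<or> l' = j" using gs by auto
      have "z \<in> upF N M" using g keyF ij by (auto simp: upF_def)
      moreover have "key i j z = key i j y" using g keyF yf True by (auto simp: key_inc[OF ij])
      ultimately show "z \<in> fib i j (upF N M) (key i j y)" by (simp add: fib_def)
    qed
    have notin: "inc j gs \<notin> inc i ` F"
    proof
      assume "inc j gs \<in> inc i ` F"
      then obtain g where g: "g \<in> F" "inc j gs = inc i g" by auto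
      have "inc j gs j = Suc mx" using gs by (simp add: inc_j)
      moreover have "inc i g j = g j" using ij by (simp add: inc_j)
      ultimately show False using g gmax[of g] by simp
    qed
    have "inj_on (inc i) F" using inj_inc[of i] by (rule inj_on_subset) simp
    hence "Suc (card F) = card ?A"
      using notin finF by (simp add: card_image)
    also have "card ?A \<le> card (fib i j (upF N M) (key i j y))" using sub fU by (rule card_mono[rotated])
    finally show ?thesis using fj yf True by (simp add: inc_j)
  qed
qed

lemma card_up_cmp:
  assumes M: "M \<subseteq> MonF N d"
  shows "card (upF N (cmp N d i j M)) \<le> card (upF N M)"
proof -
  let ?U = "upF N M" and ?U' = "upF N (cmp N d i j M)"
  have fU: "finite ?U" using upF_sub[OF M] finite_MonF finite_subset by blast
  have fU': "finite ?U'" using upF_sub[OF cmp_sub[OF ij]] finite_MonF finite_subset by blast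
  have fibs: "card (fib i j ?U' K) \<le> card (fib i j ?U K)" for K
  proof -
    have "fib i j ?U' K \<subseteq> recon i j K ` {..<card (fib i j ?U K)}"
    proof
      fix y assume y: "y \<in> fib i j ?U' K"
      hence "y j < card (fib i j ?U K)" "key i j y = K"
        using cmp_up_claim[OF M] by (auto simp: fib_def)
      moreover have "y = recon i j (key i j y) (y j)" by (rule recon_key[OF ij, symmetric])
      ultimately show "y \<in> recon i j K ` {..<card (fib i j ?U K)}" by auto
    qed
    hence "card (fib i j ?U' K) \<le> card (recon i j K ` {..<card (fib i j ?U K)})"
      by (intro card_mono) auto
    also have "\<dots> \<le> card {..<card (fib i j ?U K)}" by (rule card_image_le) simp
    finally show ?thesis by simp
  qed
  have keys: "key i j ` ?U' \<subseteq> key i j ` ?U"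
  proof
    fix K assume "K \<in> key i j ` ?U'"
    then obtain y where y: "y \<in> ?U'" "K = key i j y" by auto
    have "0 < card (fib i j ?U K)" using cmp_up_claim[OF M y(1)] y(2) by simp
    hence "fib i j ?U K \<noteq> {}" by auto
    thus "K \<in> key i j ` ?U" by (auto simp: fib_def)
  qed
  have "card ?U' = (\<Sum>K\<in>key i j ` ?U'. card (fib i j ?U' K))" by (rule card_sum_fib[OF fU'])
  also have "\<dots> \<le> (\<Sum>K\<in>key i j ` ?U'. card (fib i j ?U K))" by (intro sum_mono fibs)
  also have "\<dots> \<le> (\<Sum>K\<in>key i j ` ?U. card (fib i j ?U K))"
    by (rule sum_mono2) (use fU keys in auto)
  also have "\<dots> = card ?U" by (rule card_sum_fib[OF fU, symmetric])
  finally show ?thesis .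
qed

end

definition stab :: "nat \<Rightarrow> (nat \<Rightarrow> nat) set \<Rightarrow> bool" where
  "stab n M \<longleftrightarrow> (\<forall>f\<in>M. \<forall>i<n. 0 < f n \<longrightarrow> f(n := f n - 1, i := Suc (f i)) \<in> M)"

lemma exists_stable:
  assumes M: "M \<subseteq> MonF (Suc n) d"
  shows "\<exists>M'. M' \<subseteq> MonF (Suc n) d \<and> card M \<le> card M' \<and>
           card (upF (Suc n) M') \<le> card (upF (Suc n) M) \<and> stab n M'"
proof -
  let ?P = "\<lambda>M'. M' \<subseteq> MonF (Suc n) d \<and> card M \<le> card M' \<and> card (upF (Suc n) M') \<le> card (upF (Suc n) M)"
  have "?P M" using M by simp
  then obtain M' where M': "?P M'" and min: "\<And>X. ?P X \<Longrightarrow> (\<Sum>f\<in>M'. f n) \<le> (\<Sum>f\<in>X. f n)"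
    using ex_has_least_nat[of ?P M "\<lambda>X. \<Sum>f\<in>X. f n"] by blast
  have "stab n M'"
    unfolding stab_def
  proof (intro ballI allI impI)
    fix f i assume f: "f \<in> M'" and i: "i < n" and fn: "0 < f n"
    have ij: "i \<noteq> n" "i < Suc n" "n < Suc n" using i by auto
    have M'1: "M' \<subseteq> MonF (Suc n) d" and M'2: "card M \<le> card M'"
      and M'3: "card (upF (Suc n) M') \<le> card (upF (Suc n) M)" using M' by auto
    have "card (upF (Suc n) (cmp (Suc n) d i n M')) \<le> card (upF (Suc n) M')"
      using card_up_cmp[OF ij M'1] .
    hence "?P (cmp (Suc n) d i n M')"
      using M'1 M'2 M'3 cmp_sub[OF ij] card_cmp[OF ij M'1] by auto
    hence le: "(\<Sum>f\<in>M'. f n) \<le> (\<Sum>f\<in>cmp (Suc n) d i n M'. f n)" by (rule min)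
    have "cmp (Suc n) d i n M' = M'"
    proof (rule ccontr)
      assume "cmp (Suc n) d i n M' \<noteq> M'"
      hence "(\<Sum>f\<in>cmp (Suc n) d i n M'. f n) < (\<Sum>f\<in>M'. f n)"
        by (rule cmp_potential[OF ij M'1])
      thus False using le by simp
    qed
    thus "f(n := f n - 1, i := Suc (f i)) \<in> M'" using cmp_stable[OF ij _ f fn] by blast
  qed
  thus ?thesis using M' by blast
qed


lemma up_split:
  assumes M: "M \<subseteq> MonF (Suc n) d"
  shows "card M + card (upF n {f\<in>M. f n = 0}) \<le> card (upF (Suc n) M)"
proof -
  have fU: "finite (upF (Suc n) M)"
    using upF_sub[OF M] finite_MonF finite_subset by blast
  have sub: "inc n ` M \<union> upF n {f\<in>M. f n = 0} \<subseteq> upF (Suc n) M"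
  proof
    fix y assume "y \<in> inc n ` M \<union> upF n {f\<in>M. f n = 0}"
    thus "y \<in> upF (Suc n) M"
    proof
      assume "y \<in> inc n ` M" thus ?thesis unfolding upF_def by blast
    next
      assume "y \<in> upF n {f\<in>M. f n = 0}"
      then obtain l g where "l < n" "g \<in> M" "y = inc l g" unfolding upF_def by blast
      thus ?thesis unfolding upF_def by (metis (no_types, lifting) UN_iff image_eqI lessThan_iff less_SucI)
    qed
  qed
  have disj: "inc n ` M \<inter> upF n {f\<in>M. f n = 0} = {}"
  proof (rule ccontr)
    assume "\<not> ?thesis"
    then obtain y where y1: "y \<in> inc n ` M" and y2: "y \<in> upF n {f\<in>M. f n = 0}" by blast
    from y1 have "y n \<noteq> 0" by (auto simp: inc_def)
    moreover from y2 obtain l g where "l < n" "g n = 0" "y = inc l g" by (auto simp: upF_def)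
    hence "y n = 0" by (simp add: inc_def)
    ultimately show False by simp
  qed
  have fin1: "finite (upF n {f\<in>M. f n = 0})"
    using fU sub finite_subset by blast
  have "card M + card (upF n {f\<in>M. f n = 0}) = card (inc n ` M) + card (upF n {f\<in>M. f n = 0})"
    using inj_inc[of n] by (simp add: card_image inj_on_subset)
  also have "\<dots> = card (inc n ` M \<union> upF n {f\<in>M. f n = 0})"
  proof -
    have "finite (inc n ` M)" using fU sub by (meson finite_subset le_sup_iff)
    thus ?thesis using disj fin1 by (simp add: card_Un_disjoint)
  qed
  also have "\<dots> \<le> card (upF (Suc n) M)" using sub fU by (rule card_mono[rotated])
  finally show ?thesis .
qed

lemma stab_zero_exists:
  assumes st: "stab n M" and n: "0 < n"
  shows "f \<in> M \<Longrightarrow> \<exists>g\<in>M. g n = 0"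
proof (induction "f n" arbitrary: f)
  case 0 thus ?case by force
next
  case (Suc c)
  let ?g = "f(n := f n - 1, 0 := Suc (f 0))"
  have "0 < f n" using Suc.hyps(2) by simp
  hence "?g \<in> M" using st Suc.prems n unfolding stab_def by blast
  moreover have "?g n = c" using Suc.hyps(2) n by simp
  ultimately show ?case using Suc.hyps(1) by blast
qed

definition Pn :: "nat \<Rightarrow> bool" where
  "Pn n \<longleftrightarrow> (\<forall>d k M. M \<subseteq> MonF n d \<longrightarrow> k \<le> d \<longrightarrow> card (MonF n k) \<le> card M \<longrightarrow>
      card (MonF n (Suc k)) \<le> card (upF n M))"

lemma Q_lemma:
  assumes P: "Pn n" and n: "0 < n"
  shows "M \<subseteq> MonF (Suc n) d \<Longrightarrow> stab n M \<Longrightarrow> k \<le> d \<Longrightarrow> card (MonF (Suc n) k) \<le> card M \<Longrightarrow>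
    card (MonF n (Suc k)) \<le> card (upF n {f\<in>M. f n = 0})"
proof (induction d arbitrary: k M)
  case 0
  have k: "k = 0" using 0 by simp
  have fM: "finite M" using "0.prems"(1) finite_MonF finite_subset by blast
  have "M \<noteq> {}" using "0.prems"(4) k MonF_n_0 by auto
  then obtain f where "f \<in> M" by auto
  then obtain g where g: "g \<in> M" "g n = 0" using stab_zero_exists[OF "0.prems"(2) n] by blast
  have M0: "{f\<in>M. f n = 0} \<subseteq> MonF n 0" using "0.prems"(1) MonF_restrict[of n 0] by blast
  have "{f\<in>M. f n = 0} \<noteq> {}" using g by auto
  moreover have "finite {f\<in>M. f n = 0}" using fM by simp
  ultimately have "card (MonF n 0) \<le> card {f\<in>M. f n = 0}"
    by (simp add: MonF_n_0 Suc_leI card_gt_0_iff)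
  thus ?case using P M0 k unfolding Pn_def by blast
next
  case (Suc d')
  have fM: "finite M" using Suc.prems(1) finite_MonF finite_subset by blast
  define M0 where "M0 = {f\<in>M. f n = 0}"
  have M0sub: "M0 \<subseteq> MonF n (Suc d')" using Suc.prems(1) MonF_restrict[of n "Suc d'"] by (auto simp: M0_def)
  have key: "card (MonF n k) \<le> card M0"
  proof (cases k)
    case 0
    have "M \<noteq> {}" using Suc.prems(4) 0 MonF_n_0 by auto
    then obtain f where "f \<in> M" by auto
    then obtain g where g: "g \<in> M" "g n = 0" using stab_zero_exists[OF Suc.prems(2) n] by blast
    have "M0 \<noteq> {}" using g by (auto simp: M0_def)
    moreover have "finite M0" using fM by (simp add: M0_def)
    ultimately show ?thesis using 0 by (simp add: MonF_n_0 Suc_leI card_gt_0_iff)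
  next
    case (Suc k')
    show ?thesis
    proof (rule ccontr)
      assume "\<not> ?thesis"
      hence lt: "card M0 < card (MonF n (Suc k'))" using Suc by simp
      define M1 where "M1 = {f\<in>M. f n \<noteq> 0}"
      have "M = M0 \<union> M1" "M0 \<inter> M1 = {}" by (auto simp: M0_def M1_def)
      hence cM: "card M = card M0 + card M1" using fM by (simp add: card_Un_disjoint)
      have "card (MonF (Suc n) (Suc k')) = card (MonF (Suc n) k') + card (MonF n (Suc k'))"
        by (rule card_MonF_Suc)
      hence c1: "card (MonF (Suc n) k') \<le> card M1" using Suc.prems(4) Suc cM lt by simp
      define dec where "dec = (\<lambda>f::nat\<Rightarrow>nat. f(n := f n - 1))"
      define M2 where "M2 = dec ` M1"
      have injd: "inj_on dec M1"
      proof (rule inj_onI)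
        fix f g assume "f \<in> M1" "g \<in> M1" "dec f = dec g"
        hence "f n \<noteq> 0" "g n \<noteq> 0" "\<And>x. dec f x = dec g x" by (auto simp: M1_def)
        thus "f = g" unfolding dec_def fun_eq_iff
          by (metis fun_upd_apply diff_Suc_1 not0_implies_Suc)
      qed
      have cM2: "card M2 = card M1" using injd by (simp add: M2_def card_image)
      have M2sub: "M2 \<subseteq> MonF (Suc n) d'"
      proof
        fix g assume "g \<in> M2"
        then obtain f where f: "f \<in> M1" "g = dec f" by (auto simp: M2_def)
        have fm: "f \<in> MonF (Suc n) (Suc d')" "f n \<noteq> 0" using f Suc.prems(1) by (auto simp: M1_def)
        have "(\<Sum>x<Suc n. (f(n := f n - 1)) x) + f n = (\<Sum>x<Suc n. f x) + (f n - 1)"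
          by (rule sum_upd_lessThan) simp
        thus "g \<in> MonF (Suc n) d'" using fm f by (auto simp: MonF_def dec_def)
      qed
      have M2stab: "stab n M2"
        unfolding stab_def
      proof (intro ballI allI impI)
        fix g i assume g: "g \<in> M2" and i: "i < n" and gn: "0 < g n"
        then obtain f where f: "f \<in> M1" "g = dec f" by (auto simp: M2_def)
        have fM: "f \<in> M" "1 < f n" using f gn by (auto simp: M1_def dec_def)
        let ?f' = "f(n := f n - 1, i := Suc (f i))"
        have "?f' \<in> M" using Suc.prems(2) fM i unfolding stab_def by auto
        moreover have "?f' n \<noteq> 0" using fM i by simp
        ultimately have "?f' \<in> M1" by (simp add: M1_def)
        moreover have "dec ?f' = g(n := g n - 1, i := Suc (g i))"
          using f i by (auto simp: dec_def fun_eq_iff)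
        ultimately show "g(n := g n - 1, i := Suc (g i)) \<in> M2" unfolding M2_def by (metis imageI)
      qed
      have "k' \<le> d'" using Suc Suc.prems(3) by simp
      have IH: "card (MonF n (Suc k')) \<le> card (upF n {f\<in>M2. f n = 0})"
        using Suc.IH[OF M2sub M2stab \<open>k' \<le> d'\<close>] c1 cM2 by simp
      have sub: "upF n {f\<in>M2. f n = 0} \<subseteq> M0"
      proof
        fix y assume "y \<in> upF n {f\<in>M2. f n = 0}"
        then obtain l g where l: "l < n" and g: "g \<in> M2" "g n = 0" and y: "y = inc l g"
          by (auto simp: upF_def)
        obtain f where f: "f \<in> M1" "g = dec f" using g by (auto simp: M2_def)
        have fM: "f \<in> M" "f n = 1" using f g by (auto simp: M1_def dec_def)
        have "f(n := f n - 1, l := Suc (f l)) \<in> M" using Suc.prems(2) fM l unfolding stab_def by auto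
        moreover have "f(n := f n - 1, l := Suc (f l)) = y"
          using f l y by (auto simp: dec_def inc_def fun_eq_iff)
        moreover have "y n = 0" using fM l y \<open>f(n := f n - 1, l := Suc (f l)) = y\<close>
          by (metis One_nat_def diff_Suc_1 fun_upd_other fun_upd_same less_irrefl_nat)
        ultimately show "y \<in> M0" by (auto simp: M0_def)
      qed
      have "finite M0" using fM by (simp add: M0_def)
      hence "card (upF n {f\<in>M2. f n = 0}) \<le> card M0" using sub by (rule card_mono)
      thus False using IH lt Suc by simp
    qed
  qed
  thus ?case using P M0sub Suc.prems(3) unfolding Pn_def M0_def by blast
qed

lemma Pn_all: "Pn n"
proof (induction n)
  case 0 thus ?case by (simp add: Pn_def MonF_0_Suc)
next
  case (Suc n)
  show ?case
    unfolding Pn_def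
  proof (intro allI impI)
    fix d k M assume M: "M \<subseteq> MonF (Suc n) d" and k: "k \<le> d" and c: "card (MonF (Suc n) k) \<le> card M"
    obtain M' where M': "M' \<subseteq> MonF (Suc n) d" "card M \<le> card M'"
      "card (upF (Suc n) M') \<le> card (upF (Suc n) M)" "stab n M'"
      using exists_stable[OF M] by blast
    have q: "card (MonF n (Suc k)) \<le> card (upF n {f\<in>M'. f n = 0})"
    proof (cases "n = 0")
      case True thus ?thesis by (simp add: MonF_0_Suc)
    next
      case False
      thus ?thesis using Q_lemma[OF Suc.IH _ M'(1) M'(4) k] c M'(2) by simp
    qed
    have "card (MonF (Suc n) (Suc k)) = card (MonF (Suc n) k) + card (MonF n (Suc k))"
      by (rule card_MonF_Suc)
    also have "\<dots> \<le> card M' + card (upF n {f\<in>M'. f n = 0})" using c M'(2) q by simp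
    also have "\<dots> \<le> card (upF (Suc n) M')" by (rule up_split[OF M'(1)])
    also have "\<dots> \<le> card (upF (Suc n) M)" by (rule M'(3))
    finally show "card (MonF (Suc n) (Suc k)) \<le> card (upF (Suc n) M)" .
  qed
qed


lemma lookup_cscale: "Poly_Mapping.lookup (cscale c p) k = c * Poly_Mapping.lookup p k"
  by (simp add: cscale_def Poly_Mapping.map.rep_eq when_def)

interpretation cs: vector_space cscale
  by unfold_locales (auto intro!: poly_mapping_eqI simp: lookup_cscale lookup_add algebra_simps)

lemma cdim_eq: "cdim V = cs.dim V"
  by (simp add: cdim_def)

definition Mons :: "nat \<Rightarrow> nat \<Rightarrow> (nat \<Rightarrow>\<^sub>0 nat) set" where
  "Mons N e = {m. Poly_Mapping.keys m \<subseteq> {..<N} \<and> mdeg m = e}"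

definition lm :: "cpoly \<Rightarrow> (nat \<Rightarrow>\<^sub>0 nat)" where
  "lm f = Max (Poly_Mapping.keys f)"

definition LM :: "cpoly set \<Rightarrow> (nat \<Rightarrow>\<^sub>0 nat) set" where
  "LM V = lm ` (V - {0})"

lemma mdeg_sum:
  assumes "Poly_Mapping.keys m \<subseteq> A" "finite A"
  shows "mdeg m = (\<Sum>i\<in>A. Poly_Mapping.lookup m i)"
  unfolding mdeg_def using assms
  by (intro sum.mono_neutral_left) (auto simp: in_keys_iff)

lemma mdeg_add: "mdeg (a + b) = mdeg a + mdeg b"
proof -
  let ?A = "Poly_Mapping.keys a \<union> Poly_Mapping.keys b"
  have "mdeg (a + b) = (\<Sum>i\<in>?A. Poly_Mapping.lookup (a + b) i)"
    using keys_add[of a b] by (intro mdeg_sum) auto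
  also have "\<dots> = (\<Sum>i\<in>?A. Poly_Mapping.lookup a i) + (\<Sum>i\<in>?A. Poly_Mapping.lookup b i)"
    by (simp add: lookup_add sum.distrib)
  also have "\<dots> = mdeg a + mdeg b"
    using mdeg_sum[of a ?A] mdeg_sum[of b ?A] by simp
  finally show ?thesis .
qed

lemma mdeg_single: "mdeg (Poly_Mapping.single l 1) = 1"
  by (simp add: mdeg_def)

lemma lookup_Mons: "Poly_Mapping.lookup ` Mons N e = MonF N e"
proof (intro equalityI subsetI)
  fix f assume "f \<in> Poly_Mapping.lookup ` Mons N e"
  then obtain m where m: "m \<in> Mons N e" "f = Poly_Mapping.lookup m" by auto
  have "\<forall>x\<ge>N. f x = 0" using m by (auto simp: Mons_def in_keys_iff)
  moreover have "(\<Sum>x<N. f x) = e" using m mdeg_sum[of m "{..<N}"] by (simp add: Mons_def)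
  ultimately show "f \<in> MonF N e" by (simp add: MonF_def)
next
  fix f assume f: "f \<in> MonF N e"
  have sub: "{x. f x \<noteq> 0} \<subseteq> {..<N}"
  proof
    fix x assume "x \<in> {x. f x \<noteq> 0}"
    hence "f x \<noteq> 0" by simp
    moreover have "\<forall>x\<ge>N. f x = 0" using f by (simp add: MonF_def)
    ultimately show "x \<in> {..<N}" by (meson lessThan_iff not_le)
  qed
  hence fin: "finite {x. f x \<noteq> 0}" by (rule finite_subset) simp
  define m where "m = Abs_poly_mapping f"
  have lm: "Poly_Mapping.lookup m = f" using fin by (simp add: m_def)
  have keys: "Poly_Mapping.keys m \<subseteq> {..<N}" using sub lm by (auto simp: in_keys_iff)
  have "mdeg m = e" using mdeg_sum[OF keys] lm f by (simp add: MonF_def)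
  hence "m \<in> Mons N e" using keys by (simp add: Mons_def)
  thus "f \<in> Poly_Mapping.lookup ` Mons N e" using lm by auto
qed

lemma inj_lookup: "inj Poly_Mapping.lookup"
proof (rule injI)
  fix x y :: "'a \<Rightarrow>\<^sub>0 'b::zero" assume "Poly_Mapping.lookup x = Poly_Mapping.lookup y"
  thus "x = y" by (intro poly_mapping_eqI) simp
qed

lemma finite_Mons: "finite (Mons N e)"
proof -
  have "finite (Poly_Mapping.lookup ` Mons N e)" by (simp add: lookup_Mons finite_MonF)
  moreover have "inj_on Poly_Mapping.lookup (Mons N e)" by (rule inj_on_subset[OF inj_lookup subset_UNIV])
  ultimately show ?thesis by (rule finite_imageD)
qed

lemma card_Mons: "card (Mons N e) = card (MonF N e)"
proof -
  have "card (Poly_Mapping.lookup ` Mons N e) = card (Mons N e)"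
    by (rule card_image[OF inj_on_subset[OF inj_lookup subset_UNIV]])
  thus ?thesis by (simp add: lookup_Mons)
qed

lemma keys_SdW: "f \<in> SdW N e \<Longrightarrow> Poly_Mapping.keys f \<subseteq> Mons N e"
  by (auto simp: SdW_def SymW_def Mons_def)

lemma keys_cscale: "Poly_Mapping.keys (cscale c f) \<subseteq> Poly_Mapping.keys f"
  by (auto simp: in_keys_iff lookup_cscale)

lemma cscale_mult: "cscale c f = Poly_Mapping.single 0 c * f"
  by (simp add: cscale_def mult_map_scale_conv_mult)

lemma single0_SymW: "Poly_Mapping.single 0 c \<in> SymW N"
  by (simp add: SymW_def)

lemma subspace_SdW: "cs.subspace (SdW N e)"
  unfolding cs.subspace_def
proof (intro conjI ballI allI)
  show "0 \<in> SdW N e" by (simp add: SdW_def SymW_def)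
next
  fix x y assume "x \<in> SdW N e" "y \<in> SdW N e"
  moreover have "m \<in> Poly_Mapping.keys x \<or> m \<in> Poly_Mapping.keys y" if "m \<in> Poly_Mapping.keys (x + y)" for m
    using keys_add[of x y] that by blast
  ultimately show "x + y \<in> SdW N e" unfolding SdW_def SymW_def by blast
next
  fix c x assume "x \<in> SdW N e"
  thus "cscale c x \<in> SdW N e" using keys_cscale[of c x] by (auto simp: SdW_def SymW_def)
qed

lemma subspace_I:
  assumes "is_ideal N I"
  shows "cs.subspace (I \<inter> SdW N e)"
proof -
  have "cs.subspace I"
    unfolding cs.subspace_def using assms single0_SymW
    by (auto simp: is_ideal_def cscale_mult)
  thus ?thesis using subspace_SdW cs.subspace_inter by blast
qed

lemma keys_nonempty: "f \<noteq> 0 \<Longrightarrow> Poly_Mapping.keys f \<noteq> {}"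
  using keys_eq_empty by blast

lemma lm_in_keys: "f \<noteq> 0 \<Longrightarrow> lm f \<in> Poly_Mapping.keys f"
  unfolding lm_def by (intro Max_in) (auto simp: keys_nonempty)

lemma le_lm: "k \<in> Poly_Mapping.keys f \<Longrightarrow> k \<le> lm f"
  unfolding lm_def by simp

lemma poly_expand:
  "f = (\<Sum>m\<in>Poly_Mapping.keys f. cscale (Poly_Mapping.lookup f m) (Poly_Mapping.single m 1))"
proof (rule poly_mapping_eqI)
  fix k
  have "Poly_Mapping.lookup (\<Sum>m\<in>Poly_Mapping.keys f. cscale (Poly_Mapping.lookup f m) (Poly_Mapping.single m 1)) k
     = (\<Sum>m\<in>Poly_Mapping.keys f. (if m = k then Poly_Mapping.lookup f m else 0))"
  proof -
    have t: "\<And>x. Poly_Mapping.lookup f x * (if x = k then 1 else 0) = (if x = k then Poly_Mapping.lookup f x else 0)"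
      by simp
    show ?thesis by (simp add: lookup_sum lookup_cscale lookup_single when_def t)
  qed
  also have "\<dots> = (if k \<in> Poly_Mapping.keys f then Poly_Mapping.lookup f k else 0)"
    by (rule sum.delta) simp
  also have "\<dots> = Poly_Mapping.lookup f k"
    by (simp add: in_keys_iff)
  finally show "Poly_Mapping.lookup f k = Poly_Mapping.lookup (\<Sum>m\<in>Poly_Mapping.keys f. cscale (Poly_Mapping.lookup f m) (Poly_Mapping.single m 1)) k"
    by simp
qed

lemma SdW_span: "SdW N e \<subseteq> cs.span ((\<lambda>m. Poly_Mapping.single m 1) ` Mons N e)"
proof
  fix f assume f: "f \<in> SdW N e"
  have "(\<Sum>m\<in>Poly_Mapping.keys f. cscale (Poly_Mapping.lookup f m) (Poly_Mapping.single m 1))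
        \<in> cs.span ((\<lambda>m. Poly_Mapping.single m 1) ` Mons N e)"
  proof (rule cs.span_sum)
    fix m assume "m \<in> Poly_Mapping.keys f"
    hence "m \<in> Mons N e" using keys_SdW[OF f] by blast
    hence "Poly_Mapping.single m 1 \<in> (\<lambda>m. Poly_Mapping.single m 1) ` Mons N e" by (rule imageI)
    hence "Poly_Mapping.single m 1 \<in> cs.span ((\<lambda>m. Poly_Mapping.single m 1) ` Mons N e)"
      by (rule cs.span_base)
    thus "cscale (Poly_Mapping.lookup f m) (Poly_Mapping.single m 1) \<in> cs.span ((\<lambda>m. Poly_Mapping.single m 1) ` Mons N e)"
      by (rule cs.span_scale)
  qed
  thus "f \<in> cs.span ((\<lambda>m. Poly_Mapping.single m 1) ` Mons N e)"
    by (subst poly_expand[of f])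
qed


lemma LM_sub: "V \<subseteq> SdW N e \<Longrightarrow> LM V \<subseteq> Mons N e"
  unfolding LM_def using lm_in_keys keys_SdW by blast

lemma LM_ex: "m \<in> LM V \<Longrightarrow> \<exists>f. f \<in> V \<and> f \<noteq> 0 \<and> lm f = m"
  unfolding LM_def by auto

definition gsel :: "cpoly set \<Rightarrow> (nat \<Rightarrow>\<^sub>0 nat) \<Rightarrow> cpoly" where
  "gsel V m = (SOME f. f \<in> V \<and> f \<noteq> 0 \<and> lm f = m)"

lemma gsel: "m \<in> LM V \<Longrightarrow> gsel V m \<in> V \<and> gsel V m \<noteq> 0 \<and> lm (gsel V m) = m"
  unfolding gsel_def by (rule someI_ex[OF LM_ex])

lemma dim_upper:
  assumes sub: "cs.subspace V" and VS: "V \<subseteq> SdW N e"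
  shows "cs.dim V \<le> card (LM V)"
proof -
  let ?G = "gsel V ` LM V"
  let ?U = "Mons N e"
  have finU: "finite ?U" by (rule finite_Mons)
  have finLM: "finite (LM V)" using LM_sub[OF VS] finU by (rule finite_subset)
  have key: "f \<in> cs.span ?G" if "f \<in> V" "f \<noteq> 0" "card {k\<in>?U. k \<le> lm f} = n" for f n
    using that
  proof (induction n arbitrary: f rule: less_induct)
    case (less n f)
    define m where "m = lm f"
    have mLM: "m \<in> LM V" using less.prems by (auto simp: LM_def m_def)
    define h where "h = gsel V m"
    have h: "h \<in> V" "h \<noteq> 0" "lm h = m" using gsel[OF mLM] by (auto simp: h_def)
    have hm: "Poly_Mapping.lookup h m \<noteq> 0" using lm_in_keys[OF h(2)] h(3) by (simp add: in_keys_iff)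
    define c where "c = Poly_Mapping.lookup f m / Poly_Mapping.lookup h m"
    define f' where "f' = f - cscale c h"
    have f'V: "f' \<in> V" unfolding f'_def
      using cs.subspace_diff[OF sub less.prems(1) cs.subspace_scale[OF sub h(1)]] .
    have ff: "f = f' + cscale c h" by (simp add: f'_def)
    have hspan: "cscale c h \<in> cs.span ?G"
      using mLM unfolding h_def by (intro cs.span_scale cs.span_base) (rule imageI)
    show ?case
    proof (cases "f' = 0")
      case True thus ?thesis using ff hspan by simp
    next
      case False
      have lf': "Poly_Mapping.lookup f' k = Poly_Mapping.lookup f k - c * Poly_Mapping.lookup h k" for k
        by (simp add: f'_def lookup_minus lookup_cscale)
      have keysle: "k \<le> m" if "k \<in> Poly_Mapping.keys f'" for k
      proof -
        from that have "Poly_Mapping.lookup f k \<noteq> 0 \<or> Poly_Mapping.lookup h k \<noteq> 0"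
          using lf' by (auto simp: in_keys_iff)
        thus ?thesis using le_lm[of k f] le_lm[of k h] h(3) by (auto simp: in_keys_iff m_def)
      qed
      have "Poly_Mapping.lookup f' m = 0" using hm by (simp add: lf' c_def)
      hence mnot: "m \<notin> Poly_Mapping.keys f'" by (simp add: in_keys_iff)
      have lf'k: "lm f' \<in> Poly_Mapping.keys f'" by (rule lm_in_keys[OF False])
      have lt: "lm f' < m" using keysle[OF lf'k] lf'k mnot by (metis le_neq_trans)
      have mU: "m \<in> ?U" using lm_in_keys[OF less.prems(2)] keys_SdW less.prems(1) VS
        unfolding m_def by blast
      have ss: "{k\<in>?U. k \<le> lm f'} \<subset> {k\<in>?U. k \<le> lm f}"
      proof
        show "{k\<in>?U. k \<le> lm f'} \<subseteq> {k\<in>?U. k \<le> lm f}" using lt unfolding m_def by auto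
        show "{k\<in>?U. k \<le> lm f'} \<noteq> {k\<in>?U. k \<le> lm f}"
        proof
          assume eq: "{k\<in>?U. k \<le> lm f'} = {k\<in>?U. k \<le> lm f}"
          have "lm f \<in> {k\<in>?U. k \<le> lm f}" using mU unfolding m_def by simp
          hence "lm f \<le> lm f'" unfolding eq[symmetric] by simp
          thus False using lt unfolding m_def by simp
        qed
      qed
      have "card {k\<in>?U. k \<le> lm f'} < n"
        using psubset_card_mono[OF _ ss] finU less.prems(3) by simp
      hence "f' \<in> cs.span ?G" using less.IH f'V False by blast
      thus ?thesis using ff hspan cs.span_add by metis
    qed
  qed
  have "V \<subseteq> cs.span ?G"
  proof
    fix f assume f: "f \<in> V"
    show "f \<in> cs.span ?G"
    proof (cases "f = 0")
      case True thus ?thesis by (simp add: cs.span_zero)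
    next
      case False show ?thesis using key[OF f False refl] .
    qed
  qed
  hence "cs.dim V \<le> card ?G" by (rule cs.dim_le_card) (simp add: finLM)
  also have "card ?G \<le> card (LM V)" by (rule card_image_le[OF finLM])
  finally show ?thesis .
qed

lemma dim_lower:
  assumes sub: "cs.subspace V" and VS: "V \<subseteq> SdW N e"
  shows "card (LM V) \<le> cs.dim V"
proof -
  let ?G = "gsel V ` LM V"
  have finLM: "finite (LM V)" using LM_sub[OF VS] finite_Mons by (rule finite_subset)
  have finG: "finite ?G" using finLM by simp
  have injg: "inj_on (gsel V) (LM V)"
  proof (rule inj_onI)
    fix x y assume "x \<in> LM V" "y \<in> LM V" "gsel V x = gsel V y"
    thus "x = y" using gsel[of x V] gsel[of y V] by metis
  qed
  have Gprop: "y \<in> V \<and> y \<noteq> 0" if "y \<in> ?G" for y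
  proof -
    obtain m where "m \<in> LM V" "y = gsel V m" using \<open>y \<in> ?G\<close> by auto
    thus ?thesis using gsel[of m V] by simp
  qed
  have lminj: "x = y" if "x \<in> ?G" "y \<in> ?G" "lm x = lm y" for x y
  proof -
    obtain m where m: "m \<in> LM V" "x = gsel V m" using \<open>x \<in> ?G\<close> by auto
    obtain m' where m': "m' \<in> LM V" "y = gsel V m'" using \<open>y \<in> ?G\<close> by auto
    have "m = m'" using gsel[OF m(1)] gsel[OF m'(1)] m(2) m'(2) \<open>lm x = lm y\<close> by simp
    thus ?thesis using m(2) m'(2) by simp
  qed
  have indep: "cs.independent ?G"
  proof (rule cs.independent_if_scalars_zero[OF finG])
    fix u x assume sum0: "(\<Sum>x\<in>?G. cscale (u x) x) = 0" and xG: "x \<in> ?G"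
    show "u x = 0"
    proof (rule ccontr)
      assume ux: "u x \<noteq> 0"
      define S where "S = {y\<in>?G. u y \<noteq> 0}"
      have finS: "finite S" using finG by (simp add: S_def)
      have xS: "x \<in> S" using xG ux by (simp add: S_def)
      define mx where "mx = Max (lm ` S)"
      have "mx \<in> lm ` S" unfolding mx_def using finS xS by (intro Max_in) auto
      then obtain y0 where y0: "y0 \<in> S" "lm y0 = mx" by auto
      have ymax: "lm y \<le> mx" if "y \<in> S" for y unfolding mx_def using finS that by simp
      have y0G: "y0 \<in> ?G" and uy0: "u y0 \<noteq> 0" using y0 by (auto simp: S_def)
      have rest: "u y * Poly_Mapping.lookup y mx = 0" if "y \<in> ?G - {y0}" for y
      proof (cases "u y = 0")
        case True thus ?thesis by simp
      next
        case False
        hence yS: "y \<in> S" using that by (simp add: S_def)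
        have "lm y \<noteq> lm y0" using lminj[of y y0] that y0G by auto
        hence "lm y < mx" using ymax[OF yS] y0(2) by simp
        hence "mx \<notin> Poly_Mapping.keys y" using le_lm[of mx y] by auto
        thus ?thesis by (simp add: in_keys_iff)
      qed
      have "0 = Poly_Mapping.lookup (\<Sum>x\<in>?G. cscale (u x) x) mx" using sum0 by simp
      also have "\<dots> = (\<Sum>y\<in>?G. u y * Poly_Mapping.lookup y mx)"
        by (simp add: lookup_sum lookup_cscale)
      also have "\<dots> = u y0 * Poly_Mapping.lookup y0 mx + (\<Sum>y\<in>?G - {y0}. u y * Poly_Mapping.lookup y mx)"
        using finG y0G by (rule sum.remove)
      also have "(\<Sum>y\<in>?G - {y0}. u y * Poly_Mapping.lookup y mx) = 0"
        using rest by (rule sum.neutral[OF ballI])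
      finally have "u y0 * Poly_Mapping.lookup y0 mx = 0" by simp
      moreover have "Poly_Mapping.lookup y0 mx \<noteq> 0"
        using lm_in_keys[of y0] Gprop[OF y0G] y0(2) by (simp add: in_keys_iff)
      ultimately show False using uy0 by simp
    qed
  qed
  obtain B where B: "B \<subseteq> V" "cs.independent B" "V \<subseteq> cs.span B" "card B = cs.dim V"
    by (rule cs.basis_exists)
  let ?T = "(\<lambda>m. Poly_Mapping.single m 1) ` Mons N e"
  have "B \<subseteq> cs.span ?T" using B(1) VS SdW_span by blast
  hence finB: "finite B" using cs.independent_span_bound[of ?T B] B(2) finite_Mons by auto
  have "?G \<subseteq> V" using Gprop by blast
  hence "?G \<subseteq> cs.span B" using B(3) by blast
  hence "card ?G \<le> card B" using cs.independent_span_bound[OF finB indep] by simp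
  thus ?thesis using B(4) card_image[OF injg] by simp
qed

lemma dim_LM:
  assumes "cs.subspace V" "V \<subseteq> SdW N e"
  shows "cs.dim V = card (LM V)"
  using dim_upper[OF assms] dim_lower[OF assms] by simp


lemma single_mult_expand:
  fixes f :: cpoly
  shows "Poly_Mapping.single a c * f =
    (\<Sum>m\<in>Poly_Mapping.keys f. Poly_Mapping.single (a + m) (c * Poly_Mapping.lookup f m))"
proof -
  have e: "f = (\<Sum>m\<in>Poly_Mapping.keys f. cscale (Poly_Mapping.lookup f m) (Poly_Mapping.single m 1))"
    by (rule poly_expand)
  have "Poly_Mapping.single a c * f = Poly_Mapping.single a c *
      (\<Sum>m\<in>Poly_Mapping.keys f. cscale (Poly_Mapping.lookup f m) (Poly_Mapping.single m 1))"
    by (rule arg_cong[OF e])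
  also have "\<dots> = (\<Sum>m\<in>Poly_Mapping.keys f. Poly_Mapping.single a c *
      cscale (Poly_Mapping.lookup f m) (Poly_Mapping.single m 1))"
    by (rule sum_distrib_left)
  also have "\<dots> = (\<Sum>m\<in>Poly_Mapping.keys f. Poly_Mapping.single (a + m) (c * Poly_Mapping.lookup f m))"
    by (simp add: cscale_mult mult_single)
  finally show ?thesis .
qed

lemma lookup_single_mult:
  fixes f :: cpoly
  shows "Poly_Mapping.lookup (Poly_Mapping.single a c * f) (a + b) = c * Poly_Mapping.lookup f b"
proof -
  have "Poly_Mapping.lookup (Poly_Mapping.single a c * f) (a + b) =
      (\<Sum>m\<in>Poly_Mapping.keys f. (if m = b then c * Poly_Mapping.lookup f m else 0))"
    unfolding single_mult_expand by (simp add: lookup_sum lookup_single when_def)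
  also have "\<dots> = (if b \<in> Poly_Mapping.keys f then c * Poly_Mapping.lookup f b else 0)"
    by (rule sum.delta) simp
  also have "\<dots> = c * Poly_Mapping.lookup f b" by (simp add: in_keys_iff)
  finally show ?thesis .
qed

lemma keys_single_mult:
  fixes f :: cpoly
  assumes "c \<noteq> 0"
  shows "Poly_Mapping.keys (Poly_Mapping.single a c * f) = (+) a ` Poly_Mapping.keys f"
proof
  show "Poly_Mapping.keys (Poly_Mapping.single a c * f) \<subseteq> (+) a ` Poly_Mapping.keys f"
    using keys_mult[of "Poly_Mapping.single a c" f] assms by auto
  show "(+) a ` Poly_Mapping.keys f \<subseteq> Poly_Mapping.keys (Poly_Mapping.single a c * f)"
    using assms by (auto simp: in_keys_iff lookup_single_mult)
qed

definition xv :: "nat \<Rightarrow> cpoly" where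
  "xv l = Poly_Mapping.single (Poly_Mapping.single l 1) 1"

lemma xv_SymW: "l < N \<Longrightarrow> xv l \<in> SymW N"
  by (simp add: xv_def SymW_def)

lemma mono_add: "mono ((+) (s :: nat \<Rightarrow>\<^sub>0 nat))"
  by (rule monoI) (rule add_left_mono)

lemma xv_mult:
  assumes f: "f \<in> SdW N e" "f \<noteq> 0" and l: "l < N"
  shows "xv l * f \<in> SdW N (Suc e)" "xv l * f \<noteq> 0"
    "lm (xv l * f) = Poly_Mapping.single l 1 + lm f"
proof -
  let ?s = "Poly_Mapping.single l (1::nat)"
  have K: "Poly_Mapping.keys (xv l * f) = (+) ?s ` Poly_Mapping.keys f"
    unfolding xv_def by (rule keys_single_mult) simp
  have ne: "Poly_Mapping.keys f \<noteq> {}" by (rule keys_nonempty[OF f(2)])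
  show "xv l * f \<noteq> 0" using K ne by auto
  show "lm (xv l * f) = ?s + lm f"
    unfolding lm_def K using mono_Max_commute[OF mono_add finite_keys ne, of ?s] by simp
  show "xv l * f \<in> SdW N (Suc e)"
    unfolding SdW_def SymW_def
  proof (intro CollectI conjI ballI)
    fix m assume "m \<in> Poly_Mapping.keys (xv l * f)"
    then obtain b where b: "b \<in> Poly_Mapping.keys f" "m = ?s + b" using K by auto
    have bk: "Poly_Mapping.keys b \<subseteq> {..<N}" "mdeg b = e" using f(1) b(1) by (auto simp: SdW_def SymW_def)
    show "Poly_Mapping.keys m \<subseteq> {..<N}" using keys_add[of ?s b] bk l b(2) by auto
    show "mdeg m = Suc e" unfolding b(2) mdeg_add mdeg_single bk(2) by simp
  qed
qed

lemma lookup_add_single: "Poly_Mapping.lookup (Poly_Mapping.single l 1 + m) = inc l (Poly_Mapping.lookup m)"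
  by (auto simp: inc_def lookup_add lookup_single when_def fun_eq_iff)

lemma step:
  assumes I: "is_ideal N I" and ke: "k \<le> e"
    and c: "card (MonF N k) \<le> cdim (I \<inter> SdW N e)"
  shows "card (MonF N (Suc k)) \<le> cdim (I \<inter> SdW N (Suc e))"
proof -
  let ?V = "I \<inter> SdW N e" and ?W = "I \<inter> SdW N (Suc e)"
  have dV: "cdim ?V = card (LM ?V)"
    unfolding cdim_eq using dim_LM[OF subspace_I[OF I] Int_lower2] by simp
  have dW: "cdim ?W = card (LM ?W)"
    unfolding cdim_eq using dim_LM[OF subspace_I[OF I] Int_lower2] by simp
  have injl: "\<And>A. inj_on Poly_Mapping.lookup A" by (rule inj_on_subset[OF inj_lookup subset_UNIV])
  let ?A = "Poly_Mapping.lookup ` LM ?V"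
  have AM: "?A \<subseteq> MonF N e" using LM_sub[of ?V N e] lookup_Mons[of N e] by auto
  have cA: "card ?A = card (LM ?V)" by (rule card_image[OF injl])
  have "card (MonF N (Suc k)) \<le> card (upF N ?A)"
    using Pn_all[of N] AM ke c dV cA unfolding Pn_def by auto
  also have "upF N ?A \<subseteq> Poly_Mapping.lookup ` LM ?W"
  proof
    fix y assume "y \<in> upF N ?A"
    then obtain l m where l: "l < N" and m: "m \<in> LM ?V" and y: "y = inc l (Poly_Mapping.lookup m)"
      by (auto simp: upF_def)
    obtain f where f: "f \<in> ?V" "f \<noteq> 0" "lm f = m" using LM_ex[OF m] by blast
    have xf: "xv l * f \<in> SdW N (Suc e)" "xv l * f \<noteq> 0" "lm (xv l * f) = Poly_Mapping.single l 1 + lm f"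
      using xv_mult[of f N e l] f l by auto
    have "xv l * f \<in> I" using I xv_SymW[OF l] f(1) unfolding is_ideal_def by blast
    hence "lm (xv l * f) \<in> LM ?W" using xf unfolding LM_def by blast
    moreover have "Poly_Mapping.lookup (lm (xv l * f)) = y"
      unfolding xf(3) f(3) y lookup_add_single by (rule refl)
    ultimately show "y \<in> Poly_Mapping.lookup ` LM ?W" by (metis imageI)
  qed
  hence "card (upF N ?A) \<le> card (Poly_Mapping.lookup ` LM ?W)"
  proof (rule card_mono[rotated])
    have "LM ?W \<subseteq> Mons N (Suc e)" by (rule LM_sub) simp
    hence "finite (LM ?W)" using finite_Mons by (rule finite_subset)
    thus "finite (Poly_Mapping.lookup ` LM ?W)" by simp
  qed
  also have "\<dots> = cdim ?W" using dW card_image[OF injl] by simp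
  finally show ?thesis .
qed

lemma cdim_SdW: "cdim (SdW N e) = card (MonF N e)"
proof -
  have "LM (SdW N e) = Mons N e"
  proof
    show "LM (SdW N e) \<subseteq> Mons N e" by (rule LM_sub) simp
    show "Mons N e \<subseteq> LM (SdW N e)"
    proof
      fix m assume m: "m \<in> Mons N e"
      have "Poly_Mapping.single m (1::complex) \<in> SdW N e" using m by (simp add: SdW_def SymW_def Mons_def)
      moreover have "Poly_Mapping.single m (1::complex) \<noteq> 0" by (metis lookup_single_eq one_neq_zero lookup_zero)
      moreover have "lm (Poly_Mapping.single m (1::complex)) = m" by (simp add: lm_def)
      ultimately show "m \<in> LM (SdW N e)" unfolding LM_def by (metis DiffI imageI singletonD)
    qed
  qed
  thus ?thesis unfolding cdim_eq using dim_LM[OF subspace_SdW order_refl, of N e] card_Mons by simp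
qed

theorem corollary2p4:
  fixes N q d :: nat and I :: "cpoly set"
  assumes "is_homogeneous_ideal N I"
    and "q < d"
    and "cdim (I \<inter> SdW N d) \<ge> cdim (SdW N (d - q))"
  shows "\<forall>\<tau>::nat. cdim (I \<inter> SdW N (d + \<tau>)) \<ge> cdim (SdW N (d - q + \<tau>))"
proof
  fix \<tau> :: nat
  have I: "is_ideal N I" using assms(1) by (simp add: is_homogeneous_ideal_def)
  have "card (MonF N (d - q + \<tau>)) \<le> cdim (I \<inter> SdW N (d + \<tau>))"
  proof (induction \<tau>)
    case 0 thus ?case using assms(3) by (simp add: cdim_SdW)
  next
    case (Suc t)
    have "card (MonF N (Suc (d - q + t))) \<le> cdim (I \<inter> SdW N (Suc (d + t)))"
      by (rule step[OF I _ Suc.IH]) simp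
    thus ?case by simp
  qed
  thus "cdim (I \<inter> SdW N (d + \<tau>)) \<ge> cdim (SdW N (d - q + \<tau>))" by (simp add: cdim_SdW)
qed


end
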